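(* Let $\mathbb{R}^4_+ := \{x \in \mathbb{R}^4 : x_2^2 + x_3^2 + x_4^2 \le 2x_1x_2,\ x_1 \ge 0\}$ and let $A$ be the block diagonal matrix with rows $(0,1,0,0),(0,0,0,0),(0,0,0,4\pi),(0,0,-\pi,0)$. Identifying $(\mathbb{R}^4)'$ with $\mathbb{R}^4$ via the standard inner product, the dual cone is $\{x : x_3^2 + x_4^2 \le x_1^2 + 2x_1x_2,\ x_1\ge -x_2\}$, and both $(e^{tA})_{t\ge0}$ (with respect to $\mathbb{R}^4_+$) and its dual semigroup $(e^{tA^T})_{t\ge0}$ (with respect to the dual cone) are individually eventually nonnegative, while $(e^{tA})_{t\ge0}$ is not uniformly eventually nonnegative.
   Context: For a finite-dimensional real vector space $X$ ordered by a closed cone $X_+$ with non-empty interior and $A: X\to X$ linear, $(e^{tA})_{t\ge0}$ is individually eventually nonnegative if for each $x\in X_+$ there is $t_0\ge0$ with $e^{tA}x\in X_+$ for all $t\ge t_0$; uniformly eventually nonnegative if there is $t_0\ge0$ with $e^{tA}X_+\subseteq X_+$ for all $t\ge t_0$. The dual cone is $X'_+ := \{x' : \langle x', x\rangle\ge0\ \forall x\in X_+\}$. *)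

theory Defs
  imports "HOL-Analysis.Analysis"
begin

definition mexp_apply :: "real^'n^'n \<Rightarrow> real \<Rightarrow> real^'n \<Rightarrow> real^'n" where
  "mexp_apply A t x = (\<Sum>k. (t ^ k / fact k) *\<^sub>R (((\<lambda>y. A *v y) ^^ k) x))"

definition dual_cone :: "(real^'n) set \<Rightarrow> (real^'n) set" where
  "dual_cone K = {y. \<forall>x\<in>K. 0 \<le> y \<bullet> x}"

definition indiv_ev_nonneg :: "real^'n^'n \<Rightarrow> (real^'n) set \<Rightarrow> bool" where
  "indiv_ev_nonneg A K \<longleftrightarrow>
     (\<forall>x\<in>K. \<exists>t0\<ge>0. \<forall>t\<ge>t0. mexp_apply A t x \<in> K)"

definition unif_ev_nonneg :: "real^'n^'n \<Rightarrow> (real^'n) set \<Rightarrow> bool" where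
  "unif_ev_nonneg A K \<longleftrightarrow>
     (\<exists>t0\<ge>0. \<forall>t\<ge>t0. \<forall>x\<in>K. mexp_apply A t x \<in> K)"

definition cone4 :: "(real^4) set" where
  "cone4 = {x. (x$2)^2 + (x$3)^2 + (x$4)^2 \<le> 2 * x$1 * x$2 \<and> x$1 \<ge> 0}"

definition A4 :: "real^4^4" where
  "A4 = vector [vector [0, 1, 0, 0],
                vector [0, 0, 0, 0],
                vector [0, 0, 0, 4 * pi],
                vector [0, 0, - pi, 0]]"

end

theory Submission
  imports Defs
begin

lemma vector_4 [simp]:
 "(vector [a,b,c,d] ::('a::zero)^4)$1 = a"
 "(vector [a,b,c,d] ::('a::zero)^4)$2 = b"
 "(vector [a,b,c,d] ::('a::zero)^4)$3 = c"
 "(vector [a,b,c,d] ::('a::zero)^4)$4 = d"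
  unfolding vector_def by simp_all

lemma A4_mult: fixes y :: "real^4" shows
  "(A4 *v y)$1 = y$2" "(A4 *v y)$2 = 0" "(A4 *v y)$3 = 4*pi*y$4" "(A4 *v y)$4 = -pi*y$3"
  by (simp_all add: A4_def matrix_vector_mult_def sum_4)

lemma A4T_mult: fixes y :: "real^4" shows
  "(transpose A4 *v y)$1 = 0" "(transpose A4 *v y)$2 = y$1" "(transpose A4 *v y)$3 = -pi*y$4" "(transpose A4 *v y)$4 = 4*pi*y$3"
  by (simp_all add: A4_def matrix_vector_mult_def sum_4 transpose_def)


lemma rot_formula:
  fixes u w :: "nat \<Rightarrow> real"
  assumes U: "\<And>k. u (Suc k) = p * w k" and W: "\<And>k. w (Suc k) = q * u k"
  shows "u k = (if even k then (p*q)^(k div 2) * u 0 else (p*q)^(k div 2) * p * w 0)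
       \<and> w k = (if even k then (p*q)^(k div 2) * w 0 else (p*q)^(k div 2) * q * u 0)"
proof (induction k)
  case 0 then show ?case by simp
next
  case (Suc k)
  show ?case
  proof (cases "even k")
    case True
    then have "Suc k div 2 = k div 2" by presburger
    with True Suc show ?thesis by (simp add: U W)
  next
    case False
    then have "Suc k div 2 = Suc (k div 2)" by presburger
    with False Suc show ?thesis by (simp add: U W)
  qed
qed

lemma rot_series:
  fixes u w :: "nat \<Rightarrow> real"
  assumes U: "\<And>k. u (Suc k) = p * w k" and W: "\<And>k. w (Suc k) = q * u k"
    and pq: "p*q = - ((2*pi)^2)"
  shows "(\<lambda>k. (t^k / fact k) * u k) sums (cos (2*pi*t) * u 0 + p/(2*pi) * sin (2*pi*t) * w 0)"
proof -
  have pqm: "(p*q)^m = (-1)^m * (2*pi)^(2*m)" for m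
    unfolding pq power_mult by (rule power_minus)
  have eq: "(t^k / fact k) * u k = cos_coeff k * (2*pi*t)^k * u 0 + sin_coeff k * (2*pi*t)^k * (p/(2*pi) * w 0)" for k
  proof (cases "even k")
    case True
    then obtain m where k: "k = 2*m" by blast
    have uk: "u k = (p*q)^m * u 0" using rot_formula[where u=u and w=w and p=p and q=q and k=k, OF U W] k by simp
    have c: "cos_coeff k = (-1)^m / fact k" "sin_coeff k = 0" unfolding cos_coeff_def sin_coeff_def using k by auto
    have tp: "(2*pi*t)^k = (2*pi)^(2*m) * t^k" unfolding k by (simp only: power_mult_distrib)
    show ?thesis unfolding uk c tp pqm by simp
  next
    case False
    then obtain m where k: "k = 2*m+1" using oddE by blast
    have uk: "u k = (p*q)^m * p * w 0" using rot_formula[where u=u and w=w and p=p and q=q and k=k, OF U W] k by simp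
    have c: "sin_coeff k = (-1)^m / fact k" "cos_coeff k = 0" unfolding cos_coeff_def sin_coeff_def using k by auto
    have tp: "(2*pi*t)^k = (2*pi)^(2*m) * (2*pi) * t^k" unfolding k power_add power_one_right power_mult_distrib by (simp add: mult_ac)
    show ?thesis unfolding uk c tp pqm by (simp add: field_simps)
  qed
  have "(\<lambda>k. cos_coeff k * (2*pi*t)^k * u 0 + sin_coeff k * (2*pi*t)^k * (p/(2*pi) * w 0)) sums
        (cos (2*pi*t) * u 0 + sin (2*pi*t) * (p/(2*pi) * w 0))"
    using cos_converges[of "2*pi*t"] sin_converges[of "2*pi*t"]
    by (intro sums_add sums_mult2) auto
  then show ?thesis unfolding eq by (simp add: mult_ac)
qed

lemma nil_series:
  fixes u :: "nat \<Rightarrow> real"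
  assumes "\<And>k. k \<ge> 2 \<Longrightarrow> u k = 0"
  shows "(\<lambda>k. (t^k / fact k) * u k) sums (u 0 + t * u 1)"
proof -
  have "(\<lambda>k. (t^k / fact k) * u k) sums (\<Sum>k\<in>{0,1}. (t^k / fact k) * u k)"
    by (rule sums_finite) (use assms in auto)
  then show ?thesis by simp
qed

lemma A4T_mult': fixes y :: "real^4" shows
  "(y v* A4)$1 = 0" "(y v* A4)$2 = y$1" "(y v* A4)$3 = -pi*y$4" "(y v* A4)$4 = 4*pi*y$3"
  using A4T_mult[of y] by simp_all

lemma mexp_sums:
  fixes M :: "real^4^4"
  assumes "\<And>i. (\<lambda>k. (t^k/fact k) * (((\<lambda>y. M *v y)^^k) x $ i)) sums (L $ i)"
  shows "mexp_apply M t x = L"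
proof -
  have "(\<lambda>k. (t^k/fact k) *\<^sub>R ((\<lambda>y. M *v y)^^k) x) sums L"
    unfolding sums_def
  proof (rule vec_tendstoI)
    fix i
    show "((\<lambda>n. (\<Sum>k<n. (t^k/fact k) *\<^sub>R ((\<lambda>y. M *v y)^^k) x) $ i) \<longlongrightarrow> L $ i) sequentially"
      using assms[of i] unfolding sums_def by (simp add: sum_component)
  qed
  then show ?thesis unfolding mexp_apply_def by (rule sums_unique[symmetric])
qed

lemma mexpA4:
  fixes x :: "real^4"
  shows "mexp_apply A4 t x = vector [x$1 + t*x$2, x$2,
     cos (2*pi*t) * x$3 + 2 * sin (2*pi*t) * x$4, cos (2*pi*t) * x$4 - sin (2*pi*t) * x$3 / 2]"
proof (rule mexp_sums)
  define P where "P k = ((\<lambda>y. A4 *v y)^^k) x" for k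
  have PS: "P (Suc k) = A4 *v P k" for k unfolding P_def by simp
  have P0: "P 0 = x" unfolding P_def by simp
  have P2: "k \<ge> 1 \<Longrightarrow> P k $ 2 = 0" for k by (cases k) (auto simp: PS A4_mult)
  have P1: "k \<ge> 2 \<Longrightarrow> P k $ 1 = 0" for k
  proof -
    assume "k \<ge> 2" then obtain j where "k = Suc j" "j \<ge> 1" by (cases k) auto
    then show ?thesis by (simp add: PS A4_mult P2)
  qed
  have s1: "(\<lambda>k. (t^k/fact k) * (P k $ 1)) sums (P 0 $ 1 + t * P 1 $ 1)"
    by (rule nil_series) (rule P1)
  have s2: "(\<lambda>k. (t^k/fact k) * (P k $ 2)) sums (P 0 $ 2 + t * P 1 $ 2)"
    by (rule nil_series) (rule P2, simp)
  have s3: "(\<lambda>k. (t^k/fact k) * (P k $ 3)) sums (cos (2*pi*t) * P 0 $ 3 + (4*pi)/(2*pi) * sin (2*pi*t) * P 0 $ 4)"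
    by (rule rot_series[where q="-pi"]) (simp_all add: PS A4_mult power2_eq_square)
  have s4: "(\<lambda>k. (t^k/fact k) * (P k $ 4)) sums (cos (2*pi*t) * P 0 $ 4 + (-pi)/(2*pi) * sin (2*pi*t) * P 0 $ 3)"
    by (rule rot_series[where q="4*pi"]) (simp_all add: PS A4_mult power2_eq_square)
  have P1': "P (Suc 0) = A4 *v x" using PS[of 0] P0 by simp
  fix i :: 4
  have "i = 1 \<or> i = 2 \<or> i = 3 \<or> i = 4" by (rule exhaust_4)
  then show "(\<lambda>k. (t^k/fact k) * (((\<lambda>y. A4 *v y)^^k) x $ i)) sums (vector [x$1 + t*x$2, x$2,
     cos (2*pi*t) * x$3 + 2 * sin (2*pi*t) * x$4, cos (2*pi*t) * x$4 - sin (2*pi*t) * x$3 / 2] $ i)"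
    using s1 s2 s3 s4 unfolding P_def[symmetric] by (auto simp: P0 P1' A4_mult)
qed

lemma mexpA4T:
  fixes x :: "real^4"
  shows "mexp_apply (transpose A4) t x = vector [x$1, x$2 + t*x$1,
     cos (2*pi*t) * x$3 - sin (2*pi*t) * x$4 / 2, cos (2*pi*t) * x$4 + 2 * sin (2*pi*t) * x$3]"
proof (rule mexp_sums)
  define P where "P k = ((\<lambda>y. transpose A4 *v y)^^k) x" for k
  have PS: "P (Suc k) = transpose A4 *v P k" for k unfolding P_def by simp
  have P0: "P 0 = x" unfolding P_def by simp
  have P1: "k \<ge> 1 \<Longrightarrow> P k $ 1 = 0" for k by (cases k) (auto simp: PS A4T_mult A4T_mult')
  have P2: "k \<ge> 2 \<Longrightarrow> P k $ 2 = 0" for k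
  proof -
    assume "k \<ge> 2" then obtain j where "k = Suc j" "j \<ge> 1" by (cases k) auto
    then show ?thesis by (simp add: PS A4T_mult A4T_mult' P1)
  qed
  have s1: "(\<lambda>k. (t^k/fact k) * (P k $ 1)) sums (P 0 $ 1 + t * P 1 $ 1)"
    by (rule nil_series) (rule P1, simp)
  have s2: "(\<lambda>k. (t^k/fact k) * (P k $ 2)) sums (P 0 $ 2 + t * P 1 $ 2)"
    by (rule nil_series) (rule P2)
  have s3: "(\<lambda>k. (t^k/fact k) * (P k $ 3)) sums (cos (2*pi*t) * P 0 $ 3 + (-pi)/(2*pi) * sin (2*pi*t) * P 0 $ 4)"
    by (rule rot_series[where q="4*pi"]) (simp_all add: PS A4T_mult A4T_mult' power2_eq_square)
  have s4: "(\<lambda>k. (t^k/fact k) * (P k $ 4)) sums (cos (2*pi*t) * P 0 $ 4 + (4*pi)/(2*pi) * sin (2*pi*t) * P 0 $ 3)"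
    by (rule rot_series[where q="-pi"]) (simp_all add: PS A4T_mult A4T_mult' power2_eq_square)
  have P1': "P (Suc 0) = transpose A4 *v x" using PS[of 0] P0 by simp
  fix i :: 4
  have "i = 1 \<or> i = 2 \<or> i = 3 \<or> i = 4" by (rule exhaust_4)
  then show "(\<lambda>k. (t^k/fact k) * (((\<lambda>y. transpose A4 *v y)^^k) x $ i)) sums (vector [x$1, x$2 + t*x$1,
     cos (2*pi*t) * x$3 - sin (2*pi*t) * x$4 / 2, cos (2*pi*t) * x$4 + 2 * sin (2*pi*t) * x$3] $ i)"
    using s1 s2 s3 s4 unfolding P_def[symmetric] by (auto simp: P0 P1' A4T_mult A4T_mult')
qed


lemma sq_sum_le: fixes u w :: real shows "(u+w)^2 \<le> 2*u^2 + 2*w^2"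
proof -
  have "0 \<le> (u-w)^2" by simp
  then show ?thesis by (simp add: power2_eq_square algebra_simps)
qed

lemma sq_scale_le: fixes c a :: real assumes "c^2 \<le> 1" shows "(c*a)^2 \<le> a^2"
proof -
  have "(c*a)^2 = c^2 * a^2" by (simp add: power_mult_distrib)
  also have "\<dots> \<le> 1 * a^2" by (rule mult_right_mono[OF assms]) simp
  finally show ?thesis by simp
qed

lemma rot_bound:
  fixes c d a b :: real
  assumes "c^2 \<le> 1" "d^2 \<le> 1"
  shows "(c*a + 2*d*b)^2 + (c*b - d*a/2)^2 \<le> 10*(a^2+b^2)"
proof -
  have 1: "(c*a + 2*d*b)^2 \<le> 2*(c*a)^2 + 2*(d*(2*b))^2" using sq_sum_le[of "c*a" "d*(2*b)"] by (simp add: mult_ac)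
  have 2: "(c*b - d*a/2)^2 \<le> 2*(c*b)^2 + 2*(d*(-a/2))^2" using sq_sum_le[of "c*b" "d*(-a/2)"] by (simp add: mult_ac)
  have 3: "(c*a)^2 \<le> a^2" "(d*(2*b))^2 \<le> (2*b)^2" "(c*b)^2 \<le> b^2" "(d*(-a/2))^2 \<le> (-a/2)^2"
    by (rule sq_scale_le, rule assms)+
  have 4: "(2*b)^2 = 4*b^2" "(-a/2)^2 = a^2/4" by (simp_all add: power2_eq_square)
  have "(c*a + 2*d*b)^2 + (c*b - d*a/2)^2 \<le> (2*(c*a)^2 + 2*(d*(2*b))^2) + (2*(c*b)^2 + 2*(d*(-a/2))^2)"
    using 1 2 by (rule add_mono)
  also have "\<dots> \<le> (2*a^2 + 2*(2*b)^2) + (2*b^2 + 2*(-a/2)^2)"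
    using 3 by (intro add_mono mult_left_mono) auto
  also have "\<dots> = 10*b^2 + 5/2*a^2" unfolding 4 by simp
  also have "\<dots> \<le> 10*(a^2+b^2)" by simp
  finally show ?thesis .
qed

lemma cs_bounds: fixes x :: real shows "(cos x)^2 \<le> 1" "(sin x)^2 \<le> 1"
  using sin_cos_squared_add[of x] zero_le_power2[of "sin x"] zero_le_power2[of "cos x"] by linarith+

lemma inner4: fixes z x :: "real^4" shows "z \<bullet> x = z$1*x$1 + z$2*x$2 + z$3*x$3 + z$4*x$4"
  by (simp add: inner_vec_def sum_4)

lemma lorentz:
  fixes a0 a1 a2 a3 b0 b1 b2 b3 :: real
  assumes "a1^2+a2^2+a3^2 \<le> a0^2" "0 \<le> a0" "b1^2+b2^2+b3^2 \<le> b0^2" "0 \<le> b0"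
  shows "0 \<le> a0*b0 + a1*b1 + a2*b2 + a3*b3"
proof -
  have cs: "(a1*b1+a2*b2+a3*b3)^2 \<le> (a1^2+a2^2+a3^2)*(b1^2+b2^2+b3^2)"
  proof -
    have "(a1^2+a2^2+a3^2)*(b1^2+b2^2+b3^2) - (a1*b1+a2*b2+a3*b3)^2
        = (a1*b2-a2*b1)^2 + (a1*b3-a3*b1)^2 + (a2*b3-a3*b2)^2"
      by (simp add: power2_eq_square algebra_simps)
    moreover have "0 \<le> (a1*b2-a2*b1)^2 + (a1*b3-a3*b1)^2 + (a2*b3-a3*b2)^2" by simp
    ultimately show ?thesis by linarith
  qed
  have "(a1^2+a2^2+a3^2)*(b1^2+b2^2+b3^2) \<le> a0^2 * b0^2"
    using assms by (intro mult_mono) auto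
  also have "\<dots> = (a0*b0)^2" by (simp add: power_mult_distrib)
  finally have "(a1*b1+a2*b2+a3*b3)^2 \<le> (a0*b0)^2" using cs by linarith
  then have "\<bar>a1*b1+a2*b2+a3*b3\<bar> \<le> \<bar>a0*b0\<bar>" by (simp add: abs_le_square_iff)
  moreover have "0 \<le> a0*b0" using assms by simp
  ultimately show ?thesis by linarith
qed

lemma dual_char:
  "dual_cone cone4 = {x :: real^4. (x$3)^2 + (x$4)^2 \<le> (x$1)^2 + 2 * x$1 * x$2 \<and> x$1 \<ge> - x$2}"
proof (intro equalityI subsetI)
  fix z :: "real^4" assume "z \<in> dual_cone cone4"
  then have D: "\<And>x. x \<in> cone4 \<Longrightarrow> 0 \<le> z \<bullet> x" unfolding dual_cone_def by auto
  have "0 \<le> z \<bullet> vector [1,1,0,0]" by (rule D) (simp add: cone4_def)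
  then have h1: "0 \<le> z$1 + z$2" by (simp add: inner4)
  define n where "n = sqrt ((z$2)^2 + (z$3)^2 + (z$4)^2)"
  have n0: "0 \<le> n" unfolding n_def by simp
  have n2: "n^2 = (z$2)^2 + (z$3)^2 + (z$4)^2" unfolding n_def by simp
  have "vector [n, n - z$2, - z$3, - z$4] \<in> cone4"
    unfolding cone4_def using n0 n2 by (simp add: power2_eq_square algebra_simps)
  then have "0 \<le> z \<bullet> vector [n, n - z$2, - z$3, - z$4]" by (rule D)
  then have "0 \<le> z$1*n + z$2*(n - z$2) - (z$3)^2 - (z$4)^2" by (simp add: inner4 power2_eq_square)
  then have h2: "n^2 \<le> n * (z$1 + z$2)" using n2 by (simp add: power2_eq_square algebra_simps)
  have "n^2 \<le> (z$1 + z$2)^2"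
  proof (cases "n = 0")
    case True then show ?thesis by simp
  next
    case False
    then have "0 < n" using n0 by simp
    then have "n \<le> z$1 + z$2" using h2 by (simp add: power2_eq_square)
    then show ?thesis using n0 by (rule power_mono)
  qed
  then show "z \<in> {x :: real^4. (x$3)^2 + (x$4)^2 \<le> (x$1)^2 + 2 * x$1 * x$2 \<and> x$1 \<ge> - x$2}"
    using h1 n2 by (simp add: power2_eq_square algebra_simps)
next
  fix z :: "real^4"
  assume "z \<in> {x :: real^4. (x$3)^2 + (x$4)^2 \<le> (x$1)^2 + 2 * x$1 * x$2 \<and> x$1 \<ge> - x$2}"
  then have z: "(z$3)^2 + (z$4)^2 \<le> (z$1)^2 + 2 * z$1 * z$2" "z$1 \<ge> - z$2" by auto
  show "z \<in> dual_cone cone4" unfolding dual_cone_def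
  proof (safe)
    fix x :: "real^4" assume "x \<in> cone4"
    then have x: "(x$2)^2 + (x$3)^2 + (x$4)^2 \<le> 2 * x$1 * x$2" "x$1 \<ge> 0" unfolding cone4_def by auto
    have "0 \<le> x$1 * (z$1+z$2) + (x$1 - x$2) * (- z$2) + x$3 * z$3 + x$4 * z$4"
    proof (rule lorentz)
      show "(x$1 - x$2)^2 + (x$3)^2 + (x$4)^2 \<le> (x$1)^2" using x by (simp add: power2_eq_square algebra_simps)
      show "(- z$2)^2 + (z$3)^2 + (z$4)^2 \<le> (z$1+z$2)^2" using z by (simp add: power2_eq_square algebra_simps)
    qed (use x z in auto)
    then show "0 \<le> z \<bullet> x" by (simp add: inner4 algebra_simps)
  qed
qed


lemma indivA4: "indiv_ev_nonneg A4 cone4"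
  unfolding indiv_ev_nonneg_def
proof
  fix x :: "real^4" assume "x \<in> cone4"
  then have x: "(x$2)^2 + (x$3)^2 + (x$4)^2 \<le> 2 * x$1 * x$2" "x$1 \<ge> 0" unfolding cone4_def by auto
  have x2: "x$2 \<ge> 0"
  proof (rule ccontr)
    assume "\<not> x$2 \<ge> 0"
    then have "2 * x$1 * x$2 \<le> 0" using x(2) by (simp add: mult_nonneg_nonpos)
    moreover have "0 < (x$2)^2" using \<open>\<not> x$2 \<ge> 0\<close> by simp
    ultimately show False using x(1) zero_le_power2[of "x$3"] zero_le_power2[of "x$4"] by linarith
  qed
  define K where "K = 10 * ((x$3)^2 + (x$4)^2)"
  have rb: "(cos (2*pi*t) * x$3 + 2 * sin (2*pi*t) * x$4)^2 + (cos (2*pi*t) * x$4 - sin (2*pi*t) * x$3 / 2)^2 \<le> K" for t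
    unfolding K_def using rot_bound[OF cs_bounds(1)[of "2*pi*t"] cs_bounds(2)[of "2*pi*t"], of "x$3" "x$4"] by (simp add: mult_ac)
  show "\<exists>t0\<ge>0. \<forall>t\<ge>t0. mexp_apply A4 t x \<in> cone4"
  proof (cases "x$2 = 0")
    case True
    then have "(x$3)^2 + (x$4)^2 \<le> 0" using x(1) by simp
    then have "(x$3)^2 = 0" "(x$4)^2 = 0" using zero_le_power2[of "x$3"] zero_le_power2[of "x$4"] by linarith+
    then have "x$3 = 0" "x$4 = 0" by simp_all
    then show ?thesis using True x(2) by (intro exI[of _ 0]) (simp add: mexpA4 cone4_def)
  next
    case False
    then have p: "0 < x$2" using x2 by simp
    define t0 where "t0 = (K + (x$2)^2) / (2 * (x$2)^2)"
    have K0: "0 \<le> K" unfolding K_def by simp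
    have "0 \<le> t0" unfolding t0_def using K0 by simp
    moreover have "mexp_apply A4 t x \<in> cone4" if "t \<ge> t0" for t
    proof -
      have "t0 * (2 * (x$2)^2) = K + (x$2)^2" unfolding t0_def using p by simp
      moreover have "t0 * (2 * (x$2)^2) \<le> t * (2 * (x$2)^2)" using that p by (intro mult_right_mono) auto
      ultimately have T: "K + (x$2)^2 \<le> 2 * t * (x$2)^2" by simp
      have "0 \<le> x$1 * x$2" using x(2) x2 by simp
      have "0 \<le> t" using that \<open>0 \<le> t0\<close> by simp
      then have "0 \<le> t * x$2" using x2 by simp
      have "(x$2)^2 + ((cos (2*pi*t) * x$3 + 2 * sin (2*pi*t) * x$4)^2 + (cos (2*pi*t) * x$4 - sin (2*pi*t) * x$3 / 2)^2)
          \<le> 2 * (x$1 + t * x$2) * x$2"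
        using rb[of t] T \<open>0 \<le> x$1 * x$2\<close> by (simp add: algebra_simps power2_eq_square)
      then show ?thesis using x(2) \<open>0 \<le> t * x$2\<close> by (simp add: mexpA4 cone4_def add.assoc)
    qed
    ultimately show ?thesis by blast
  qed
qed

lemma indivA4T: "indiv_ev_nonneg (transpose A4) (dual_cone cone4)"
  unfolding indiv_ev_nonneg_def dual_char
proof
  fix z :: "real^4" assume "z \<in> {x :: real^4. (x$3)^2 + (x$4)^2 \<le> (x$1)^2 + 2 * x$1 * x$2 \<and> x$1 \<ge> - x$2}"
  then have z: "(z$3)^2 + (z$4)^2 \<le> (z$1)^2 + 2 * z$1 * z$2" "z$1 \<ge> - z$2" by auto
  have z1: "z$1 \<ge> 0"
  proof (rule ccontr)
    assume "\<not> z$1 \<ge> 0"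
    then have n: "z$1 < 0" "z$1 + 2*z$2 > 0" using z(2) by auto
    then have "z$1 * (z$1 + 2*z$2) < 0" by (rule mult_neg_pos)
    then have "(z$1)^2 + 2 * z$1 * z$2 < 0" by (simp add: power2_eq_square algebra_simps)
    then show False using z(1) zero_le_power2[of "z$3"] zero_le_power2[of "z$4"] by linarith
  qed
  define K where "K = 10 * ((z$4)^2 + (z$3)^2)"
  have rb: "(cos (2*pi*t) * z$3 - sin (2*pi*t) * z$4 / 2)^2 + (cos (2*pi*t) * z$4 + 2 * sin (2*pi*t) * z$3)^2 \<le> K" for t
    unfolding K_def using rot_bound[OF cs_bounds(1)[of "2*pi*t"] cs_bounds(2)[of "2*pi*t"], of "z$4" "z$3"] by (simp add: mult_ac add.commute)
  show "\<exists>t0\<ge>0. \<forall>t\<ge>t0. mexp_apply (transpose A4) t z \<in> {x :: real^4. (x$3)^2 + (x$4)^2 \<le> (x$1)^2 + 2 * x$1 * x$2 \<and> x$1 \<ge> - x$2}"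
  proof (cases "z$1 = 0")
    case True
    then have "(z$3)^2 + (z$4)^2 \<le> 0" using z(1) by simp
    then have "(z$3)^2 = 0" "(z$4)^2 = 0" using zero_le_power2[of "z$3"] zero_le_power2[of "z$4"] by linarith+
    then have "z$3 = 0" "z$4 = 0" by simp_all
    then show ?thesis using True z(2) by (intro exI[of _ 0]) (simp add: mexpA4T)
  next
    case False
    then have p: "0 < z$1" using z1 by simp
    define t0 where "t0 = (K + 2 * z$1 * \<bar>z$2\<bar>) / (2 * (z$1)^2) + \<bar>z$2\<bar> / z$1"
    have K0: "0 \<le> K" unfolding K_def by simp
    have "0 \<le> t0" unfolding t0_def using K0 p by simp
    moreover have "mexp_apply (transpose A4) t z \<in> {x :: real^4. (x$3)^2 + (x$4)^2 \<le> (x$1)^2 + 2 * x$1 * x$2 \<and> x$1 \<ge> - x$2}" if "t \<ge> t0" for t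
    proof -
      define t1 where "t1 = (K + 2 * z$1 * \<bar>z$2\<bar>) / (2 * (z$1)^2)"
      define t2 where "t2 = \<bar>z$2\<bar> / z$1"
      have t12: "t0 = t1 + t2" "0 \<le> t1" "0 \<le> t2" unfolding t0_def t1_def t2_def using p K0 by simp_all
      have e1: "t1 * (2 * (z$1)^2) = K + 2 * (z$1 * \<bar>z$2\<bar>)" unfolding t1_def using p by simp
      have e2: "t2 * z$1 = \<bar>z$2\<bar>" unfolding t2_def using p by simp
      have "t1 * (2 * (z$1)^2) \<le> t * (2 * (z$1)^2)" using that t12 p by (intro mult_right_mono) auto
      then have T1: "K + 2 * (z$1 * \<bar>z$2\<bar>) \<le> 2 * (t * (z$1)^2)" using e1 by simp
      have "t2 * z$1 \<le> t * z$1" using that t12 p by (intro mult_right_mono) auto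
      then have T2: "\<bar>z$2\<bar> \<le> t * z$1" using e2 by simp
      have m1: "- (z$1 * z$2) \<le> z$1 * \<bar>z$2\<bar>" using p
        by (metis abs_ge_minus_self abs_mult abs_of_pos)
      have "K \<le> (z$1)^2 + 2 * (z$1 * z$2) + 2 * (t * (z$1)^2)"
        using T1 m1 zero_le_power2[of "z$1"] by linarith
      also have "\<dots> = (z$1)^2 + 2 * z$1 * (z$2 + t * z$1)" by (simp add: algebra_simps power2_eq_square)
      finally have "K \<le> (z$1)^2 + 2 * z$1 * (z$2 + t * z$1)" .
      then have A: "(cos (2*pi*t) * z$3 - sin (2*pi*t) * z$4 / 2)^2 + (cos (2*pi*t) * z$4 + 2 * sin (2*pi*t) * z$3)^2
          \<le> (z$1)^2 + 2 * z$1 * (z$2 + t * z$1)" using rb[of t] by linarith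
      have B: "z$1 \<ge> - (z$2 + t * z$1)" using T2 p by linarith
      show ?thesis using A B by (simp add: mexpA4T)
    qed
    ultimately show ?thesis by blast
  qed
qed

lemma not_unifA4: "\<not> unif_ev_nonneg A4 cone4"
  unfolding unif_ev_nonneg_def
proof
  assume "\<exists>t0\<ge>0. \<forall>t\<ge>t0. \<forall>x\<in>cone4. mexp_apply A4 t x \<in> cone4"
  then obtain t0 where t0: "t0 \<ge> 0" "\<And>t x. t \<ge> t0 \<Longrightarrow> x \<in> cone4 \<Longrightarrow> mexp_apply A4 t x \<in> cone4" by blast
  define n where "n = nat \<lceil>t0\<rceil>"
  define t where "t = real n + 1/4"
  have tt0: "t \<ge> t0" unfolding t_def n_def by linarith
  have t_0: "t \<ge> 0" using tt0 t0 by simp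
  have arg: "2*pi*t = real (2*n) * pi + pi/2" unfolding t_def by (simp add: algebra_simps)
  have cs: "cos (2*pi*t) = 0" "sin (2*pi*t) = 1" unfolding arg
    by (simp_all add: cos_add sin_add)
  define e where "e = 1 / (t + 1)"
  have e0: "0 < e" "e \<le> 1" unfolding e_def using t_0 by auto
  have e2: "e^2 \<le> 1" using e0 by (simp add: power_le_one)
  define x :: "real^4" where "x = vector [1, e^2, 0, e]"
  have h: "(e^2)^2 \<le> e^2" using mult_right_mono[OF e2, of "e^2"] by (simp add: power2_eq_square[of "e^2"])
  have "x \<in> cone4" using h by (simp add: cone4_def x_def)
  then have "mexp_apply A4 t x \<in> cone4" using t0(2) tt0 by blast
  then have "(e^2)^2 + (2*e)^2 \<le> 2 * (1 + t * e^2) * e^2"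
    unfolding cone4_def by (simp add: mexpA4 x_def cs)
  then have "e^2 * (e^2 + 2 - 2 * t * e^2) \<le> 0" by (simp add: power2_eq_square algebra_simps)
  then have "e^2 + 2 - 2 * t * e^2 \<le> 0" using e0 by (simp add: mult_le_0_iff)
  moreover have "t * e^2 < 1"
  proof -
    have "t * e^2 = t / (t+1)^2" unfolding e_def by (simp add: power_divide)
    also have "\<dots> < 1"
    proof -
      have q: "t < (t+1)^2"
      proof -
        have "(t+1)^2 = t*t + 2*t + 1" by (simp add: power2_eq_square algebra_simps)
        moreover have "0 \<le> t*t" using t_0 by simp
        ultimately show ?thesis using t_0 by linarith
      qed
      have "0 < (t+1)^2" using t_0 by simp
      then show ?thesis using q by (simp add: divide_less_eq)
    qed
    finally show ?thesis .
  qed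
  ultimately show False using zero_le_power2[of e] by linarith
qed

theorem mainTheorem6:
  shows "dual_cone cone4 =
           {x :: real^4. (x$3)^2 + (x$4)^2 \<le> (x$1)^2 + 2 * x$1 * x$2 \<and> x$1 \<ge> - x$2}
       \<and> indiv_ev_nonneg A4 cone4
       \<and> indiv_ev_nonneg (transpose A4) (dual_cone cone4)
       \<and> \<not> unif_ev_nonneg A4 cone4"
  using dual_char indivA4 indivA4T not_unifA4 by blast


end
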